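(* For any $i\in[n]$, the number of classical parking functions $p\in\mathrm{PF}_n$ whose classical outcome is $\mathrm{Inc}_i^n:=i(i+1)\cdots n\,12\cdots(i-1)$ equals $(n+1-i)!\,(i-1)!$.
   Context: $[n]=\{1,\dots,n\}$; permutations of $[n]$ are written in one-line notation. A parking preference is $p=(p_1,\dots,p_n)\in[n]^n$. Classical parking process: cars $1,\dots,n$ enter in order into spots $1,\dots,n$, initially unoccupied; car $i$ parks in the first unoccupied spot $k\ge p_i$ and fails if there is none. $\mathrm{PF}_n$ is the set of $p$ for which all cars park; the classical outcome of $p$ is the permutation $\pi$ with $\pi_k$ the car in spot $k$ at the end. *)

theory Defs
  imports Main "HOL-Library.FuncSet"
begin

text \<open>Parking configuration: a function from spots to cars, where 0 means
  "unoccupied". Spots are 1..n, cars are 1..n. A preference p is a function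
  on cars 1..n with values in 1..n.\<close>

fun park :: "nat \<Rightarrow> (nat \<Rightarrow> nat) \<Rightarrow> nat \<Rightarrow> (nat \<Rightarrow> nat) option" where
  "park n p 0 = Some (\<lambda>k. 0)"
| "park n p (Suc m) =
     (case park n p m of
        None \<Rightarrow> None
      | Some occ \<Rightarrow>
          (if (\<exists>k. p (Suc m) \<le> k \<and> k \<le> n \<and> occ k = 0)
           then Some (occ((LEAST k. p (Suc m) \<le> k \<and> k \<le> n \<and> occ k = 0) := Suc m))
           else None))"

definition prefs :: "nat \<Rightarrow> (nat \<Rightarrow> nat) set" where
  "prefs n = ({1..n} \<rightarrow>\<^sub>E {1..n})"

definition PF :: "nat \<Rightarrow> (nat \<Rightarrow> nat) set" where
  "PF n = {p \<in> prefs n. park n p n \<noteq> None}"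

definition outcome :: "nat \<Rightarrow> (nat \<Rightarrow> nat) \<Rightarrow> (nat \<Rightarrow> nat)" where
  "outcome n p = the (park n p n)"

text \<open>The permutation Inc_i^n = i (i+1) ... n 1 2 ... (i-1) in one-line notation,
  as a function spot \<mapsto> entry (0 outside 1..n).\<close>
definition Inc :: "nat \<Rightarrow> nat \<Rightarrow> (nat \<Rightarrow> nat)" where
  "Inc n i k = (if 1 \<le> k \<and> k \<le> n + 1 - i then i + k - 1
                else if n + 1 - i < k \<and> k \<le> n then k - (n + 1 - i) else 0)"

end

theory Submission imports Defs begin

definition occ :: "nat \<Rightarrow> nat \<Rightarrow> nat \<Rightarrow> nat \<Rightarrow> nat" where
  "occ n i t k = (if Inc n i k \<le> t then Inc n i k else 0)"
definition spot :: "nat \<Rightarrow> nat \<Rightarrow> nat \<Rightarrow> nat" where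
  "spot n i c = (if c < i then n + 1 - i + c else c + 1 - i)"
definition B :: "nat \<Rightarrow> nat \<Rightarrow> nat \<Rightarrow> nat set" where
  "B n i c = (if c < i then {n + 1 - i + 1 .. n + 1 - i + c} else {1 .. c + 1 - i})"

lemma Inc_spot: "1 \<le> i \<Longrightarrow> i \<le> n \<Longrightarrow> 1 \<le> c \<Longrightarrow> c \<le> n \<Longrightarrow> Inc n i (spot n i c) = c"
  unfolding Inc_def spot_def by auto

lemma Inc_inj: "1 \<le> i \<Longrightarrow> i \<le> n \<Longrightarrow> Inc n i k = c \<Longrightarrow> 1 \<le> c \<Longrightarrow> k = spot n i c"
  unfolding Inc_def spot_def by (auto split: if_splits)

lemma Inc_le: "Inc n i k \<le> n"
  unfolding Inc_def by auto

lemma occ_Suc: "1 \<le> i \<Longrightarrow> i \<le> n \<Longrightarrow> Suc t \<le> n \<Longrightarrow>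
   occ n i (Suc t) = (occ n i t)(spot n i (Suc t) := Suc t)"
  apply (rule ext)
  subgoal for k
  proof -
    assume a: "1 \<le> i" "i \<le> n" "Suc t \<le> n"
    have h: "Inc n i (spot n i (Suc t)) = Suc t" using Inc_spot[of i n "Suc t"] a by simp
    show ?thesis
    proof (cases "k = spot n i (Suc t)")
      case True thus ?thesis using h unfolding occ_def by simp
    next
      case False
      hence "Inc n i k \<noteq> Suc t" using Inc_inj[of i n k "Suc t"] a by auto
      thus ?thesis using False unfolding occ_def by (auto simp: le_Suc_eq)
    qed
  qed
  done

lemma least_eq_iff: "((\<exists>k. P k) \<and> (LEAST k::nat. P k) = s) \<longleftrightarrow> (P s \<and> (\<forall>k<s. \<not> P k))"
  by (metis LeastI Least_equality not_less_Least linorder_not_less)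

lemma stepB:
  assumes "1 \<le> i" "i \<le> n" "Suc t \<le> n" "1 \<le> q"
  shows "((\<exists>k. q \<le> k \<and> k \<le> n \<and> occ n i t k = 0) \<and>
          (LEAST k. q \<le> k \<and> k \<le> n \<and> occ n i t k = 0) = spot n i (Suc t))
         \<longleftrightarrow> q \<in> B n i (Suc t)"
  unfolding least_eq_iff
  using assms unfolding occ_def Inc_def spot_def B_def
  apply (cases "Suc t < i")
  subgoal apply auto apply (drule spec[of _ q]) by auto
  subgoal apply auto done
  done

lemma stepC:
  assumes "1 \<le> i" "i \<le> n" "Suc t \<le> n" "occ' L = 0"
    "occ'(L := Suc t) = occ n i (Suc t)"
  shows "occ' = occ n i t \<and> L = spot n i (Suc t)"
proof -
  have "occ n i (Suc t) L = Suc t" using assms(5) by (metis fun_upd_same)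
  hence "Inc n i L = Suc t" unfolding occ_def by (auto split: if_splits)
  hence L: "L = spot n i (Suc t)" using Inc_inj assms by auto
  have z: "occ n i t L = 0" using \<open>Inc n i L = Suc t\<close> unfolding occ_def by auto
  have "occ' = occ'(L := 0)" using assms(4) by auto
  also have "\<dots> = (occ'(L := Suc t))(L := 0)" by simp
  also have "\<dots> = (occ n i t)(L := 0)" using assms(5) occ_Suc[OF assms(1-3)] L by simp
  also have "\<dots> = occ n i t" using z by auto
  finally show ?thesis using L by simp
qed

lemma key:
  assumes "1 \<le> i" "i \<le> n" "p \<in> prefs n"
  shows "t \<le> n \<Longrightarrow> park n p t = Some (occ n i t) \<longleftrightarrow> (\<forall>c\<in>{1..t}. p c \<in> B n i c)"
proof (induction t)
  case 0
  then show ?case by (auto simp: occ_def Inc_def fun_eq_iff)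
next
  case (Suc t)
  have q: "1 \<le> p (Suc t)" using assms(3) Suc.prems unfolding prefs_def by auto
  let ?P = "\<lambda>k. p (Suc t) \<le> k \<and> k \<le> n \<and> occ n i t k = 0"
  show ?case
  proof
    assume h: "park n p (Suc t) = Some (occ n i (Suc t))"
    then obtain occ' where o: "park n p t = Some occ'"
      by (cases "park n p t") auto
    let ?Q = "\<lambda>k. p (Suc t) \<le> k \<and> k \<le> n \<and> occ' k = 0"
    have ex: "\<exists>k. ?Q k" using h o by (auto split: if_splits)
    have e: "occ'((LEAST k. ?Q k) := Suc t) = occ n i (Suc t)" using h o ex by auto
    have z: "occ' (LEAST k. ?Q k) = 0" using LeastI_ex[OF ex] by blast
    from stepC[OF assms(1,2) Suc.prems z e]
    have c: "occ' = occ n i t" "(LEAST k. ?Q k) = spot n i (Suc t)" by auto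
    have ih: "\<forall>c\<in>{1..t}. p c \<in> B n i c" using Suc.IH Suc.prems o c by auto
    have "p (Suc t) \<in> B n i (Suc t)"
      using stepB[OF assms(1,2) Suc.prems q] ex c by auto
    with ih show "\<forall>c\<in>{1..Suc t}. p c \<in> B n i c" by (auto simp: le_Suc_eq)
  next
    assume h: "\<forall>c\<in>{1..Suc t}. p c \<in> B n i c"
    hence "park n p t = Some (occ n i t)" using Suc by auto
    moreover have "(\<exists>k. ?P k) \<and> (LEAST k. ?P k) = spot n i (Suc t)"
      using stepB[OF assms(1,2) Suc.prems q] h by auto
    ultimately show "park n p (Suc t) = Some (occ n i (Suc t))"
      using occ_Suc[OF assms(1,2) Suc.prems] by auto
  qed
qed


theorem proposition3p1:
  fixes n i :: nat
  assumes "i \<in> {1..n}"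
  shows "card {p \<in> PF n. outcome n p = Inc n i} = fact (n + 1 - i) * fact (i - 1)"
proof -
  have i: "1 \<le> i" "i \<le> n" using assms by auto
  have occn: "occ n i n = Inc n i" using Inc_le by (auto simp: occ_def fun_eq_iff)
  have Bsub: "\<And>c. c \<in> {1..n} \<Longrightarrow> B n i c \<subseteq> {1..n}" using i by (auto simp: B_def)
  have set: "{p \<in> PF n. outcome n p = Inc n i} = PiE {1..n} (B n i)"
  proof (rule set_eqI)
    fix p
    have "p \<in> {p \<in> PF n. outcome n p = Inc n i} \<longleftrightarrow> p \<in> prefs n \<and> park n p n = Some (occ n i n)"
      unfolding PF_def outcome_def occn by auto
    also have "\<dots> \<longleftrightarrow> p \<in> prefs n \<and> (\<forall>c\<in>{1..n}. p c \<in> B n i c)"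
      using key[OF i, of p n] by auto
    also have "\<dots> \<longleftrightarrow> p \<in> PiE {1..n} (B n i)"
      unfolding prefs_def using Bsub by (auto simp: PiE_iff) (meson atLeastAtMost_iff subsetD)+
    finally show "p \<in> {p \<in> PF n. outcome n p = Inc n i} \<longleftrightarrow> p \<in> PiE {1..n} (B n i)" .
  qed
  have cp: "card (PiE {1..n} (B n i)) = (\<Prod>c\<in>{1..n}. card (B n i c))" by (simp add: card_PiE)
  have "{1..n} = {1..i-1} \<union> {i..n}" using i by auto
  hence "(\<Prod>c\<in>{1..n}. card (B n i c)) = (\<Prod>c\<in>{1..i-1} \<union> {i..n}. card (B n i c))" by simp
  also have "(\<Prod>c\<in>{1..i-1} \<union> {i..n}. card (B n i c)) =
      (\<Prod>c\<in>{1..i-1}. card (B n i c)) * (\<Prod>c\<in>{i..n}. card (B n i c))"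
    by (rule prod.union_disjoint) auto
  also have "(\<Prod>c\<in>{1..i-1}. card (B n i c)) = (\<Prod>c\<in>{1..i-1}. c)"
    by (rule prod.cong) (auto simp: B_def)
  also have "(\<Prod>c\<in>{i..n}. card (B n i c)) = (\<Prod>c\<in>{i..n}. c + 1 - i)"
    by (rule prod.cong) (auto simp: B_def)
  also have "(\<Prod>c\<in>{i..n}. c + 1 - i) = (\<Prod>c\<in>{1..n+1-i}. c)"
    by (rule prod.reindex_bij_witness[where i="\<lambda>c. c + i - 1" and j="\<lambda>c. c + 1 - i"]) (use i in auto)
  finally show ?thesis unfolding set cp by (simp add: fact_prod mult.commute)
qed

end
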